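(* Let $G$ and $H$ be finite simple graphs, and let $x$ be a vertex of $G$ and $y$ a vertex of $H$. Then the curvature of the strong product at the vertex $(x,y)$ is the product of the curvatures: $$K_{G*H}(x,y)=K_G(x)\,K_H(y).$$
   Context: All graphs are finite simple graphs. A complete subgraph with $k+1$ vertices has dimension $k$; $f_k(G)$ denotes the number of complete subgraphs of $G$ of dimension $k$, and the simplex generating function is $f_G(t)=1+f_0(G)t+f_1(G)t^2+\cdots+f_d(G)t^{d+1}$ (for the empty graph $f_G(t)=1$). For a vertex $x$ of $G$, the unit sphere $S(x)$ is the subgraph of $G$ induced on the set of vertices adjacent to $x$. The curvature of $G$ at $x$ is $K_G(x)=\int_{-1}^0 f_{S(x)}(s)\,ds = 1-\frac{f_0(S(x))}{2}+\frac{f_1(S(x))}{3}-\frac{f_2(S(x))}{4}+\cdots$. The strong product $G*H$ has vertex set $V(G)\times V(H)$, and two distinct vertices $(a,b),(c,d)$ are adjacent iff ($a=c$ or $a$ is adjacent to $c$ in $G$) and ($b=d$ or $b$ is adjacent to $d$ in $H$). *)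

theory Defs
  imports "HOL-Analysis.Analysis"
begin

definition simple_graph :: "'a set \<Rightarrow> ('a \<Rightarrow> 'a \<Rightarrow> bool) \<Rightarrow> bool" where
  "simple_graph V E \<longleftrightarrow> finite V \<and>
     (\<forall>u v. E u v \<longrightarrow> u \<in> V \<and> v \<in> V \<and> u \<noteq> v \<and> E v u)"

definition cliques :: "'a set \<Rightarrow> ('a \<Rightarrow> 'a \<Rightarrow> bool) \<Rightarrow> 'a set set" where
  "cliques V E = {A. A \<subseteq> V \<and> (\<forall>u\<in>A. \<forall>v\<in>A. u \<noteq> v \<longrightarrow> E u v)}"

definition fnum :: "'a set \<Rightarrow> ('a \<Rightarrow> 'a \<Rightarrow> bool) \<Rightarrow> nat \<Rightarrow> nat" where
  "fnum V E k = card {A \<in> cliques V E. card A = k + 1}"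

definition simplex_gf :: "'a set \<Rightarrow> ('a \<Rightarrow> 'a \<Rightarrow> bool) \<Rightarrow> real \<Rightarrow> real" where
  "simplex_gf V E t = 1 + (\<Sum>k<card V. real (fnum V E k) * t ^ (k + 1))"

definition sphere_V :: "'a set \<Rightarrow> ('a \<Rightarrow> 'a \<Rightarrow> bool) \<Rightarrow> 'a \<Rightarrow> 'a set" where
  "sphere_V V E x = {v \<in> V. E x v}"

definition sphere_E :: "'a set \<Rightarrow> ('a \<Rightarrow> 'a \<Rightarrow> bool) \<Rightarrow> 'a \<Rightarrow> 'a \<Rightarrow> 'a \<Rightarrow> bool" where
  "sphere_E V E x u v \<longleftrightarrow> E u v \<and> u \<in> sphere_V V E x \<and> v \<in> sphere_V V E x"

definition curvature :: "'a set \<Rightarrow> ('a \<Rightarrow> 'a \<Rightarrow> bool) \<Rightarrow> 'a \<Rightarrow> real" where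
  "curvature V E x = integral {-1..0} (simplex_gf (sphere_V V E x) (sphere_E V E x))"

definition strong_V :: "'a set \<Rightarrow> 'b set \<Rightarrow> ('a \<times> 'b) set" where
  "strong_V V W = V \<times> W"

definition strong_E :: "'a set \<Rightarrow> ('a \<Rightarrow> 'a \<Rightarrow> bool) \<Rightarrow> 'b set \<Rightarrow> ('b \<Rightarrow> 'b \<Rightarrow> bool)
    \<Rightarrow> 'a \<times> 'b \<Rightarrow> 'a \<times> 'b \<Rightarrow> bool" where
  "strong_E V E W F p q \<longleftrightarrow> p \<in> V \<times> W \<and> q \<in> V \<times> W \<and> p \<noteq> q \<and>
     (fst p = fst q \<or> E (fst p) (fst q)) \<and> (snd p = snd q \<or> F (snd p) (snd q))"

end

theory Submission imports Defs begin

lemma pow_int: "((\<lambda>t::real. t^k) has_integral ((-1)^k / (k+1))) {-1..0}"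
proof -
  have "((\<lambda>t::real. t^k) has_integral ((\<lambda>t. t^(k+1)/(k+1)) 0 - (\<lambda>t. t^(k+1)/(k+1)) (-1))) {-1..0}"
  proof (rule fundamental_theorem_of_calculus)
    show "(-1::real) \<le> 0" by simp
    fix t :: real
    have "((\<lambda>t. t^(k+1)/(k+1)) has_real_derivative (real (k+1) * t^k / (k+1))) (at t within {-1..0})"
      by (intro DERIV_cdivide) (use DERIV_pow[of "k+1" t "{-1..0}"] in simp)
    then have "((\<lambda>t. t^(k+1)/(k+1)) has_real_derivative t^k) (at t within {-1..0})"
      by (simp del: of_nat_Suc add: field_simps)
    then show "((\<lambda>t. t^(k+1)/(k+1)) has_vector_derivative t^k) (at t within {-1..0})"
      by (simp add: has_real_derivative_iff_has_vector_derivative)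
  qed
  then show ?thesis by (simp add: add.commute)
qed

lemma shift_int: "((\<lambda>t::real. (1+t)^n) has_integral (1 / (n+1))) {-1..0}"
proof -
  define f where "f = (\<lambda>t::real. (1+t)^(Suc n) / real (Suc n))"
  have "((\<lambda>t::real. (1+t)^n) has_integral (f 0 - f (-1))) {-1..0}"
  proof (rule fundamental_theorem_of_calculus)
    show "(-1::real) \<le> 0" by simp
    fix t :: real
    have d1: "((\<lambda>t. 1+t) has_real_derivative 1) (at t within {-1..0})"
      by (auto intro!: derivative_eq_intros)
    have "(f has_real_derivative ((1 + real n) * (1 * (1+t)^n) / real (Suc n))) (at t within {-1..0})"
      unfolding f_def by (intro DERIV_cdivide DERIV_power_Suc d1)
    moreover have "(1 + real n) * (1 * (1+t)^n) / real (Suc n) = (1+t)^n" by simp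
    ultimately show "(f has_vector_derivative (1+t)^n) (at t within {-1..0})"
      by (simp add: has_real_derivative_iff_has_vector_derivative)
  qed
  then show ?thesis by (simp add: f_def add.commute)
qed

lemma pow_sum: "finite Z \<Longrightarrow> (\<Sum>A\<in>Pow Z. (t::real)^card A) = (1+t)^card Z"
proof (induction Z rule: finite_induct)
  case empty then show ?case by simp
next
  case (insert a Z)
  have d: "Pow Z \<inter> insert a ` Pow Z = {}" using insert by auto
  have inj: "inj_on (insert a) (Pow Z)" using insert unfolding inj_on_def
    by (metis Pow_iff insert_ident subsetD)
  have "(\<Sum>A\<in>Pow (insert a Z). t^card A) = (\<Sum>A\<in>Pow Z. t^card A) + (\<Sum>A\<in>insert a ` Pow Z. t^card A)"
    unfolding Pow_insert using insert d by (intro sum.union_disjoint) auto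
  also have "(\<Sum>A\<in>insert a ` Pow Z. t^card A) = (\<Sum>A\<in>Pow Z. t^card (insert a A))"
    using sum.reindex[OF inj] by simp
  also have "\<dots> = (\<Sum>A\<in>Pow Z. t * t^card A)"
  proof (rule sum.cong)
    fix A assume "A \<in> Pow Z"
    then have "finite A" "a \<notin> A" using insert finite_subset by auto
    then show "t^card (insert a A) = t * t^card A" by simp
  qed simp
  finally show ?case using insert by (simp add: sum_distrib_left[symmetric] algebra_simps)
qed

lemma alt_sum: "finite S \<Longrightarrow> (\<Sum>D\<in>Pow S. (-1::real)^card D) = (if S = {} then 1 else 0)"
  using pow_sum[of S "-1"] by (auto simp: card_eq_0_iff)

lemma I1: assumes "finite Z" shows "(\<Sum>A\<in>Pow Z. (-1::real)^card A / (card A + 1)) = 1 / (card Z + 1)"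
proof -
  have "((\<lambda>t. \<Sum>A\<in>Pow Z. t^card A) has_integral (\<Sum>A\<in>Pow Z. (-1::real)^card A / (card A + 1))) {-1..0}"
    using assms pow_int by (intro has_integral_sum) (auto simp: add.commute)
  moreover have "((\<lambda>t. \<Sum>A\<in>Pow Z. t^card A) has_integral (1 / (card Z + 1))) {-1..0}"
    using pow_sum[OF assms] shift_int[of "card Z"] by (simp add: add.commute)
  ultimately show ?thesis using has_integral_unique by blast
qed

lemma I2: assumes "finite X"
  shows "(\<Sum>D\<in>Pow X. (-1::real)^card D / (card (X - D) + 1)) = (-1)^card X / (card X + 1)"
proof -
  have "(\<Sum>D\<in>Pow X. (-1::real)^card D / (card (X - D) + 1))
      = (\<Sum>C\<in>Pow X. (-1::real)^card (X - C) / (card (X - (X - C)) + 1))"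
    by (rule sum.reindex_bij_witness[of _ "\<lambda>D. X - D" "\<lambda>D. X - D"]) (auto simp: Diff_Diff_Int Int_absorb1 Int_Diff)
  also have "\<dots> = (\<Sum>C\<in>Pow X. (-1)^card X * ((-1::real)^card C / (card C + 1)))"
  proof (rule sum.cong)
    fix C assume C: "C \<in> Pow X"
    then have fc: "finite C" using assms finite_subset by auto
    have "X - (X - C) = C" using C by auto
    moreover have "card (X - C) + card C = card X"
      using C assms by (metis PowD card_Diff_subset fc le_add_diff_inverse2 card_mono)
    then have "(-1::real)^card X = (-1)^card (X - C) * (-1)^card C" by (metis power_add)
    then have "(-1::real)^card (X - C) = (-1)^card X * (-1)^card C"
      by (metis (no_types, lifting) mult.assoc mult.right_neutral power_add power_one left_minus_one_mult_self)
    ultimately show "(-1::real)^card (X - C) / (card (X - (X - C)) + 1) = (-1)^card X * ((-1::real)^card C / (card C + 1))"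
      by simp
  qed simp
  also have "\<dots> = (-1)^card X / (card X + 1)"
    using I1[OF assms] by (simp only: sum_distrib_left[symmetric]) simp
  finally show ?thesis .
qed

lemma gf_sum: assumes "finite V'"
  shows "simplex_gf V' E' t = (\<Sum>A\<in>cliques V' E'. t^card A)"
proof -
  let ?C = "cliques V' E'"
  let ?n = "card V'"
  have fC: "finite ?C" using assms unfolding cliques_def by (rule rev_finite_subset[OF finite_Pow_iff[THEN iffD2]]) auto
  have cardle: "card A < Suc ?n" if "A \<in> ?C" for A
    using that assms unfolding cliques_def by (auto intro: card_mono simp: less_Suc_eq_le)
  have "(\<Sum>A\<in>?C. t^card A) = (\<Sum>k<Suc ?n. \<Sum>A\<in>{A. A \<in> ?C \<and> card A = k}. t^card A)"
    using cardle by (intro sum.group[symmetric] fC) auto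
  also have "\<dots> = (\<Sum>k<Suc ?n. real (card {A. A \<in> ?C \<and> card A = k}) * t^k)"
    by (intro sum.cong refl) simp
  also have "\<dots> = real (card {A. A \<in> ?C \<and> card A = 0}) * t^0 + (\<Sum>k<?n. real (fnum V' E' k) * t^(k+1))"
    unfolding sum.lessThan_Suc_shift fnum_def by simp
  also have "{A. A \<in> ?C \<and> card A = 0} = {{}}"
  proof (intro equalityI subsetI)
    fix A assume "A \<in> {A. A \<in> ?C \<and> card A = 0}"
    then have "A \<subseteq> V'" "card A = 0" by (auto simp: cliques_def)
    then have "A = {}" using assms by (metis card_0_eq finite_subset)
    then show "A \<in> {{}}" by simp
  qed (auto simp: cliques_def)
  finally show ?thesis unfolding simplex_gf_def by simp
qed

definition wt :: "nat \<Rightarrow> real" where "wt k = (-1)^k / (real k + 1)"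

lemma filt: "finite X \<Longrightarrow> (\<Sum>D\<in>Pow (X - B). (-1::real)^card D) = (\<Sum>D\<in>Pow X. if D \<inter> B = {} then (-1)^card D else 0)"
proof -
  assume f: "finite X"
  have "{D \<in> Pow X. D \<inter> B = {}} = Pow (X - B)" by auto
  then show ?thesis using sum.inter_filter[of "Pow X" "\<lambda>D. (-1::real)^card D" "\<lambda>D. D \<inter> B = {}"] f by simp
qed

lemma core:
  fixes X :: "'a set" and Y :: "'b set"
  assumes fX: "finite X" and fY: "finite Y" and xX: "x \<notin> X" and yY: "y \<notin> Y"
  shows "(\<Sum>A\<in>{A. A \<subseteq> (insert x X \<times> insert y Y) - {(x,y)} \<and> fst`A - {x} = X \<and> snd`A - {y} = Y}. wt (card A))
        = wt (card X) * wt (card Y)"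
proof -
  define U where "U = (insert x X \<times> insert y Y) - {(x,y)}"
  have fU: "finite U" unfolding U_def using fX fY by simp
  define c where "c = (\<lambda>A::('a\<times>'b) set. fst`A - {x} = X \<and> snd`A - {y} = Y)"
  have "{A. A \<subseteq> U \<and> c A} = {A \<in> Pow U. c A}" by auto
  then have "(\<Sum>A\<in>{A. A \<subseteq> U \<and> c A}. wt (card A)) = (\<Sum>A\<in>Pow U. if c A then wt (card A) else 0)"
    using sum.inter_filter[of "Pow U" "\<lambda>A. wt (card A)" c] fU by simp
  also have "\<dots> = (\<Sum>A\<in>Pow U. \<Sum>D1\<in>Pow X. \<Sum>D2\<in>Pow Y.
       if D1 \<inter> fst`A = {} \<and> D2 \<inter> snd`A = {} then wt (card A) * ((-1)^card D1 * (-1)^card D2) else 0)"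
  proof (rule sum.cong[OF refl])
    fix A assume A: "A \<in> Pow U"
    have "fst`A - {x} \<subseteq> X" "snd`A - {y} \<subseteq> Y" using A unfolding U_def by auto
    then have "c A \<longleftrightarrow> X - fst`A = {} \<and> Y - snd`A = {}" unfolding c_def using xX yY by auto
    then have "(if c A then wt (card A) else 0) = wt (card A) * ((\<Sum>D\<in>Pow (X - fst`A). (-1::real)^card D) * (\<Sum>D\<in>Pow (Y - snd`A). (-1::real)^card D))"
      using alt_sum[of "X - fst`A"] alt_sum[of "Y - snd`A"] fX fY by auto
    also have "\<dots> = wt (card A) * ((\<Sum>D1\<in>Pow X. if D1 \<inter> fst`A = {} then (-1)^card D1 else 0) * (\<Sum>D2\<in>Pow Y. if D2 \<inter> snd`A = {} then (-1)^card D2 else 0))"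
      using filt[OF fX] filt[OF fY] by simp
    also have "\<dots> = (\<Sum>D1\<in>Pow X. \<Sum>D2\<in>Pow Y.
       if D1 \<inter> fst`A = {} \<and> D2 \<inter> snd`A = {} then wt (card A) * ((-1)^card D1 * (-1)^card D2) else 0)"
      by (subst sum_product, subst sum_distrib_left, subst sum_distrib_left) (intro sum.cong refl, auto)
    finally show "(if c A then wt (card A) else 0) = \<dots>" .
  qed
  also have "\<dots> = (\<Sum>D1\<in>Pow X. \<Sum>D2\<in>Pow Y. \<Sum>A\<in>Pow U.
       if D1 \<inter> fst`A = {} \<and> D2 \<inter> snd`A = {} then wt (card A) * ((-1)^card D1 * (-1)^card D2) else 0)"
    by (subst sum.swap) (simp add: sum.swap[of _ "Pow Y"])
  also have "\<dots> = (\<Sum>D1\<in>Pow X. \<Sum>D2\<in>Pow Y. ((-1)^card D1 / (card (X - D1) + 1)) * ((-1)^card D2 / (card (Y - D2) + 1)))"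
  proof (intro sum.cong refl)
    fix D1 D2 assume D1: "D1 \<in> Pow X" and D2: "D2 \<in> Pow Y"
    define U' where "U' = (insert x (X - D1) \<times> insert y (Y - D2)) - {(x,y)}"
    have fU': "finite U'" unfolding U'_def using fX fY by simp
    have "{A \<in> Pow U. D1 \<inter> fst`A = {} \<and> D2 \<inter> snd`A = {}} = Pow U'"
    proof (intro equalityI subsetI)
      fix A assume A: "A \<in> {A \<in> Pow U. D1 \<inter> fst`A = {} \<and> D2 \<inter> snd`A = {}}"
      then have "\<forall>p\<in>A. fst p \<notin> D1 \<and> snd p \<notin> D2" by blast
      moreover have "A \<subseteq> U" using A by blast
      ultimately show "A \<in> Pow U'" unfolding U_def U'_def by auto
    next
      fix A assume A: "A \<in> Pow U'"
      have "U' \<subseteq> U" unfolding U_def U'_def by auto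
      moreover have "fst ` A \<subseteq> insert x (X - D1)" "snd ` A \<subseteq> insert y (Y - D2)"
        using A unfolding U'_def by auto
      ultimately show "A \<in> {A \<in> Pow U. D1 \<inter> fst`A = {} \<and> D2 \<inter> snd`A = {}}"
        using A D1 D2 xX yY by blast
    qed
    then have "(\<Sum>A\<in>Pow U. if D1 \<inter> fst`A = {} \<and> D2 \<inter> snd`A = {} then wt (card A) * ((-1)^card D1 * (-1)^card D2) else 0)
       = (\<Sum>A\<in>Pow U'. wt (card A) * ((-1)^card D1 * (-1)^card D2))"
      using sum.inter_filter[of "Pow U" "\<lambda>A. wt (card A) * ((-1)^card D1 * (-1)^card D2)" "\<lambda>A. D1 \<inter> fst`A = {} \<and> D2 \<inter> snd`A = {}"] fU
      by simp
    also have "\<dots> = ((-1)^card D1 * (-1)^card D2) * (1 / (card U' + 1))"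
      using I1[OF fU'] by (simp only: sum_distrib_right[symmetric]) (simp add: wt_def add.commute)
    also have "card U' + 1 = (card (X - D1) + 1) * (card (Y - D2) + 1)"
    proof -
      have "card (insert x (X - D1) \<times> insert y (Y - D2)) = (card (X - D1) + 1) * (card (Y - D2) + 1)"
        using fX fY xX yY by (simp only: card_cartesian_product) simp
      moreover have "card U' = card (insert x (X - D1) \<times> insert y (Y - D2)) - 1"
        unfolding U'_def by (rule card_Diff_singleton) simp
      ultimately show ?thesis by simp
    qed
    finally show "(\<Sum>A\<in>Pow U. if D1 \<inter> fst`A = {} \<and> D2 \<inter> snd`A = {} then wt (card A) * ((-1)^card D1 * (-1)^card D2) else 0)
       = ((-1)^card D1 / (card (X - D1) + 1)) * ((-1)^card D2 / (card (Y - D2) + 1))"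
      by (simp add: algebra_simps)
  qed
  also have "\<dots> = (\<Sum>D1\<in>Pow X. (-1::real)^card D1 / (card (X - D1) + 1)) * (\<Sum>D2\<in>Pow Y. (-1::real)^card D2 / (card (Y - D2) + 1))"
    by (simp add: sum_product)
  also have "\<dots> = wt (card X) * wt (card Y)"
    using I2[OF fX] I2[OF fY] by (simp add: wt_def add.commute)
  finally show ?thesis unfolding U_def c_def .
qed

lemma curv_sum: assumes "simple_graph V E"
  shows "curvature V E x = (\<Sum>A\<in>cliques (sphere_V V E x) (sphere_E V E x). wt (card A))"
proof -
  let ?S = "sphere_V V E x" and ?SE = "sphere_E V E x"
  have fS: "finite ?S" using assms unfolding simple_graph_def sphere_V_def by simp
  have fC: "finite (cliques ?S ?SE)" using fS unfolding cliques_def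
    by (rule rev_finite_subset[OF finite_Pow_iff[THEN iffD2]]) auto
  have "((\<lambda>t. \<Sum>A\<in>cliques ?S ?SE. t^card A) has_integral (\<Sum>A\<in>cliques ?S ?SE. wt (card A))) {-1..0}"
    using fC pow_int by (intro has_integral_sum) (auto simp: wt_def add.commute)
  moreover have "simplex_gf ?S ?SE = (\<lambda>t. \<Sum>A\<in>cliques ?S ?SE. t^card A)"
    using gf_sum[OF fS] by auto
  ultimately show ?thesis unfolding curvature_def by (simp add: integral_unique)
qed

theorem theorem1:
  fixes V :: "'a set" and E :: "'a \<Rightarrow> 'a \<Rightarrow> bool"
    and W :: "'b set" and F :: "'b \<Rightarrow> 'b \<Rightarrow> bool"
  assumes "simple_graph V E" and "simple_graph W F"
    and "x \<in> V" and "y \<in> W"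
  shows "curvature (strong_V V W) (strong_E V E W F) (x, y) = curvature V E x * curvature W F y"
proof -
  have gE: "\<And>u v. E u v \<Longrightarrow> u \<in> V \<and> v \<in> V \<and> u \<noteq> v \<and> E v u" and fV: "finite V"
    using assms(1) unfolding simple_graph_def by auto
  have gF: "\<And>u v. F u v \<Longrightarrow> u \<in> W \<and> v \<in> W \<and> u \<noteq> v \<and> F v u" and fW: "finite W"
    using assms(2) unfolding simple_graph_def by auto
  have sg: "simple_graph (strong_V V W) (strong_E V E W F)"
    unfolding simple_graph_def strong_V_def strong_E_def using fV fW gE gF by auto
  define N1 where "N1 = sphere_V V E x"
  define N2 where "N2 = sphere_V W F y"
  define C1 where "C1 = cliques N1 (sphere_E V E x)"
  define C2 where "C2 = cliques N2 (sphere_E W F y)"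
  define SE where "SE = strong_E V E W F"
  define PV where "PV = sphere_V (strong_V V W) SE (x,y)"
  define CP where "CP = cliques PV (sphere_E (strong_V V W) SE (x,y))"
  have N1: "N1 = {v \<in> V. E x v}" unfolding N1_def sphere_V_def by simp
  have N2: "N2 = {v \<in> W. F y v}" unfolding N2_def sphere_V_def by simp
  have fN1: "finite N1" "finite N2" using fV fW N1 N2 by auto
  have xN1: "x \<notin> N1" "y \<notin> N2" using gE gF N1 N2 by auto
  have C1: "C1 = {A. A \<subseteq> N1 \<and> (\<forall>u\<in>A. \<forall>v\<in>A. u \<noteq> v \<longrightarrow> E u v)}"
    unfolding C1_def cliques_def sphere_E_def N1_def by blast
  have C2: "C2 = {A. A \<subseteq> N2 \<and> (\<forall>u\<in>A. \<forall>v\<in>A. u \<noteq> v \<longrightarrow> F u v)}"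
    unfolding C2_def cliques_def sphere_E_def N2_def by blast
  have PV: "PV = (insert x N1 \<times> insert y N2) - {(x,y)}"
    unfolding PV_def sphere_V_def SE_def strong_E_def strong_V_def N1 N2
    using assms(3,4) gE gF by auto
  have CP: "CP = {A. A \<subseteq> PV \<and> (\<forall>p\<in>A. \<forall>q\<in>A. p \<noteq> q \<longrightarrow> SE p q)}"
    unfolding CP_def cliques_def sphere_E_def PV_def by blast
  have fC1: "finite C1" "finite C2" using fN1 unfolding C1 C2 by auto
  have fCP: "finite CP" unfolding CP PV using fN1 by auto
  define g where "g = (\<lambda>A::('a\<times>'b) set. (fst`A - {x}, snd`A - {y}))"
  have gimg: "g ` CP \<subseteq> C1 \<times> C2"
  proof
    fix Z assume "Z \<in> g ` CP"
    then obtain A where A: "A \<in> CP" and Z: "Z = g A" by blast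
    have sub: "A \<subseteq> PV" and cl: "\<And>p q. p \<in> A \<Longrightarrow> q \<in> A \<Longrightarrow> p \<noteq> q \<Longrightarrow> SE p q"
      using A unfolding CP by auto
    have "fst`A - {x} \<in> C1" unfolding C1
    proof (intro CollectI conjI ballI impI)
      show "fst`A - {x} \<subseteq> N1" using sub unfolding PV by auto
      fix u v assume u: "u \<in> fst`A - {x}" and v: "v \<in> fst`A - {x}" and uv: "u \<noteq> v"
      then obtain p q where "p \<in> A" "q \<in> A" "fst p = u" "fst q = v" by auto
      then show "E u v" using cl[of p q] uv unfolding SE_def strong_E_def by auto
    qed
    moreover have "snd`A - {y} \<in> C2" unfolding C2
    proof (intro CollectI conjI ballI impI)
      show "snd`A - {y} \<subseteq> N2" using sub unfolding PV by auto
      fix u v assume u: "u \<in> snd`A - {y}" and v: "v \<in> snd`A - {y}" and uv: "u \<noteq> v"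
      then obtain p q where "p \<in> A" "q \<in> A" "snd p = u" "snd q = v" by auto
      then show "F u v" using cl[of p q] uv unfolding SE_def strong_E_def by auto
    qed
    ultimately show "Z \<in> C1 \<times> C2" unfolding Z g_def by simp
  qed
  have fiber: "{A. A \<in> CP \<and> g A = (X,Y)} = {A. A \<subseteq> (insert x X \<times> insert y Y) - {(x,y)} \<and> fst`A - {x} = X \<and> snd`A - {y} = Y}"
    if XY: "(X,Y) \<in> C1 \<times> C2" for X Y
  proof (intro equalityI subsetI)
    fix A assume "A \<in> {A. A \<in> CP \<and> g A = (X,Y)}"
    then have A: "A \<subseteq> PV" "fst`A - {x} = X" "snd`A - {y} = Y" unfolding CP g_def by auto
    have "A \<subseteq> (insert x X \<times> insert y Y) - {(x,y)}"
    proof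
      fix p assume p: "p \<in> A"
      have "p \<in> PV" using A(1) p by blast
      hence "p \<noteq> (x,y)" unfolding PV by simp
      moreover have "fst p \<in> insert x X" using A(2) p by blast
      moreover have "snd p \<in> insert y Y" using A(3) p by blast
      ultimately show "p \<in> (insert x X \<times> insert y Y) - {(x,y)}" by (cases p) auto
    qed
    then show "A \<in> {A. A \<subseteq> (insert x X \<times> insert y Y) - {(x,y)} \<and> fst`A - {x} = X \<and> snd`A - {y} = Y}"
      using A by simp
  next
    fix A assume "A \<in> {A. A \<subseteq> (insert x X \<times> insert y Y) - {(x,y)} \<and> fst`A - {x} = X \<and> snd`A - {y} = Y}"
    then have A: "A \<subseteq> (insert x X \<times> insert y Y) - {(x,y)}" and AX: "fst`A - {x} = X" and AY: "snd`A - {y} = Y" by auto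
    have X: "X \<subseteq> N1" "\<And>u v. u \<in> X \<Longrightarrow> v \<in> X \<Longrightarrow> u \<noteq> v \<Longrightarrow> E u v" using XY unfolding C1 by auto
    have Y: "Y \<subseteq> N2" "\<And>u v. u \<in> Y \<Longrightarrow> v \<in> Y \<Longrightarrow> u \<noteq> v \<Longrightarrow> F u v" using XY unfolding C2 by auto
    have APV: "A \<subseteq> PV" using A X(1) Y(1) unfolding PV by auto
    have ex: "u = v \<or> E u v" if "u \<in> insert x X" "v \<in> insert x X" for u v
      using that X gE unfolding N1 by auto
    have ey: "u = v \<or> F u v" if "u \<in> insert y Y" "v \<in> insert y Y" for u v
      using that Y gF unfolding N2 by auto
    have "SE p q" if "p \<in> A" "q \<in> A" "p \<noteq> q" for p q
    proof -
      have "p \<in> V \<times> W" "q \<in> V \<times> W" using APV that unfolding PV N1 N2 using assms(3,4) by auto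
      moreover have "fst p \<in> insert x X" "fst q \<in> insert x X" "snd p \<in> insert y Y" "snd q \<in> insert y Y"
        using A that by auto
      ultimately show ?thesis unfolding SE_def strong_E_def using that ex ey by blast
    qed
    then have "A \<in> CP" unfolding CP using APV by blast
    then show "A \<in> {A. A \<in> CP \<and> g A = (X,Y)}" unfolding g_def using AX AY by simp
  qed
  have "curvature (strong_V V W) (strong_E V E W F) (x, y) = (\<Sum>A\<in>CP. wt (card A))"
    unfolding curv_sum[OF sg] CP_def PV_def SE_def ..
  also have "\<dots> = (\<Sum>XY\<in>C1 \<times> C2. \<Sum>A\<in>{A. A \<in> CP \<and> g A = XY}. wt (card A))"
    using fCP fC1 gimg by (intro sum.group[symmetric]) auto
  also have "\<dots> = (\<Sum>XY\<in>C1 \<times> C2. wt (card (fst XY)) * wt (card (snd XY)))"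
  proof (rule sum.cong[OF refl])
    fix XY assume XY: "XY \<in> C1 \<times> C2"
    obtain X Y where XYe: "XY = (X,Y)" by fastforce
    have "X \<subseteq> N1" "Y \<subseteq> N2" using XY XYe unfolding C1 C2 by auto
    then have "finite X" "finite Y" "x \<notin> X" "y \<notin> Y" using fN1 xN1 finite_subset by auto
    note h = this
    have F: "{A. A \<in> CP \<and> g A = XY} = {A. A \<subseteq> (insert x X \<times> insert y Y) - {(x,y)} \<and> fst`A - {x} = X \<and> snd`A - {y} = Y}"
      unfolding XYe by (rule fiber) (use XY XYe in simp)
    show "(\<Sum>A\<in>{A. A \<in> CP \<and> g A = XY}. wt (card A)) = wt (card (fst XY)) * wt (card (snd XY))"
      unfolding F unfolding XYe fst_conv snd_conv by (rule core) (use h in auto)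
  qed
  also have "\<dots> = (\<Sum>X\<in>C1. wt (card X)) * (\<Sum>Y\<in>C2. wt (card Y))"
    unfolding sum_product sum.cartesian_product by (simp add: case_prod_beta)
  also have "\<dots> = curvature V E x * curvature W F y"
    unfolding curv_sum[OF assms(1)] curv_sum[OF assms(2)] C1_def C2_def N1_def N2_def ..
  finally show ?thesis .
qed

end
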